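(* Let $k$ be a positive integer and $2\le l\le k+4$. Let $N^l_k$ be the lattice ${\mathbb{Z}}^{l+1}$ with basis $\ell_0,\dots,\ell_l$ and scalar product $(\ell_0,\ell_0)=k$, $(\ell_i,\ell_i)=-1$ for $1\le i\le l$, $(\ell_i,\ell_j)=0$ for $i\ne j$, and let $\omega=-\frac{k+2}{k}\ell_0+\ell_1+\dots+\ell_l\in N^l_k\otimes{\mathbb{Q}}$. Let $R^l_k$ be the set of $\ell\in N^l_k$ with $(\ell,\ell)=-2$ and $(\ell,\omega)=0$. Then $R^l_k\subset\omega^\perp$ is a root system. If $l\ge k+2$, it is a root system in the vector space $\omega^\perp\otimes_{\mathbb{Z}}{\mathbb{R}}\subset N^l_k\otimes_{\mathbb{Z}}{\mathbb{R}}$. If $2\le l<k+2$, $R^l_k$ spans a hyperplane in $\omega^\perp\otimes_{\mathbb{Z}}{\mathbb{R}}$.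
   Context: $\omega^\perp$ denotes the sublattice of $N^l_k$ of elements orthogonal to $\omega$. A root system in a Euclidean space $V$ is a finite spanning set $R$ such that the only multiples of $x\in R$ in $R$ are $\pm x$, $R$ is closed under the reflections in its elements, and $2(x,m)/(x,x)\in{\mathbb{Z}}$ for all $x,m\in R$ (here with respect to the negative of the scalar product, which is positive definite on $\omega^\perp$). *)

theory Defs
  imports "HOL-Analysis.Analysis"
begin

text \<open>The lattice N^l_k is modelled inside the real vector space
  real \<times> (real^'n), where the first component is the coefficient of ell_0 and
  the index type 'n (with CARD('n) = l) indexes ell_1, ..., ell_l.\<close>

definition lat_form :: "nat \<Rightarrow> real \<times> (real^'n) \<Rightarrow> real \<times> (real^'n) \<Rightarrow> real" where
  "lat_form k x y = real k * fst x * fst y - (\<Sum>i\<in>UNIV. snd x $ i * snd y $ i)"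

definition lattice_pts :: "(real \<times> (real^'n)) set" where
  "lattice_pts = {x. fst x \<in> \<int> \<and> (\<forall>i. snd x $ i \<in> \<int>)}"

definition omega :: "nat \<Rightarrow> real \<times> (real^'n)" where
  "omega k = (- (real k + 2) / real k, (\<chi> i. 1))"

definition omega_perp :: "nat \<Rightarrow> (real \<times> (real^'n)) set" where
  "omega_perp k = {v. lat_form k v (omega k) = 0}"

definition roots :: "nat \<Rightarrow> (real \<times> (real^'n)) set" where
  "roots k = {x \<in> lattice_pts. lat_form k x x = -2 \<and> lat_form k x (omega k) = 0}"

definition root_system_in ::
  "('v::real_vector \<Rightarrow> 'v \<Rightarrow> real) \<Rightarrow> 'v set \<Rightarrow> 'v set \<Rightarrow> bool" where
  "root_system_in ip V R \<longleftrightarrow>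
     subspace V \<and> (\<forall>v\<in>V. v \<noteq> 0 \<longrightarrow> ip v v > 0) \<and>
     finite R \<and> R \<subseteq> V \<and> span R = V \<and> 0 \<notin> R \<and>
     (\<forall>x\<in>R. \<forall>c::real. c *\<^sub>R x \<in> R \<longrightarrow> c = 1 \<or> c = -1) \<and>
     (\<forall>x\<in>R. \<forall>m\<in>R. m - (2 * ip x m / ip x x) *\<^sub>R x \<in> R) \<and>
     (\<forall>x\<in>R. \<forall>m\<in>R. 2 * ip x m / ip x x \<in> \<int>)"

end

theory Submission
  imports Defs
begin

lemma lf_sym: "lat_form k x y = lat_form k y x"
  unfolding lat_form_def by (simp add: mult.commute mult.left_commute)
lemma lf_add_left: "lat_form k (x + y) z = lat_form k x z + lat_form k y z"
  unfolding lat_form_def by (simp add: algebra_simps sum.distrib)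
lemma lf_diff_left: "lat_form k (x - y) z = lat_form k x z - lat_form k y z"
  unfolding lat_form_def by (simp add: algebra_simps sum_subtractf)
lemma lf_scale_left: "lat_form k (c *\<^sub>R x) z = c * lat_form k x z"
  unfolding lat_form_def by (simp add: algebra_simps sum_distrib_left)
lemma lf_zero_left[simp]: "lat_form k 0 z = 0"
  unfolding lat_form_def by simp
lemma lf_omega: "k \<ge> 1 \<Longrightarrow> lat_form k x (omega k) = - (real k + 2) * fst x - (\<Sum>i\<in>UNIV. snd x $ i)"
  unfolding lat_form_def omega_def by simp

lemma subspace_perp: "subspace (omega_perp k)"
  unfolding subspace_def omega_perp_def by (simp add: lf_add_left lf_scale_left)

lemma key_ineq:
  fixes v :: "real \<times> (real^'n)"
  assumes "k \<ge> 1" "v \<in> omega_perp k"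
  shows "real CARD('n) * (- lat_form k v v) \<ge> ((real k + 2)^2 - real CARD('n) * real k) * (fst v)^2"
proof -
  have s: "(\<Sum>i\<in>UNIV. snd v $ i) = - (real k + 2) * fst v"
    using assms lf_omega[of k v] unfolding omega_perp_def by simp
  have cs: "(\<Sum>i\<in>UNIV. snd v $ i)^2 \<le> (\<Sum>i\<in>UNIV. (snd v $ i)^2) * real CARD('n)"
    by (rule sum_squared_le_sum_of_squares)
  have q: "- lat_form k v v = (\<Sum>i\<in>UNIV. (snd v $ i)^2) - real k * (fst v)^2"
    unfolding lat_form_def by (simp add: power2_eq_square)
  show ?thesis using cs unfolding q s by (simp add: algebra_simps power2_eq_square)
qed


lemma coef_ge4:
  assumes "CARD('n::finite) \<le> k + 4"
  shows "((real k + 2)^2 - real CARD('n) * real k) \<ge> 4"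
proof -
  have "real CARD('n) * real k \<le> (real k + 4) * real k"
    using assms by (intro mult_right_mono) auto
  then show ?thesis by (simp add: power2_eq_square algebra_simps)
qed

lemma pos_def:
  fixes v :: "real \<times> (real^'n)"
  assumes "k \<ge> 1" "CARD('n) \<le> k + 4" "v \<in> omega_perp k" "v \<noteq> 0"
  shows "- lat_form k v v > 0"
proof (cases "fst v = 0")
  case True
  then have "snd v \<noteq> 0" using assms(4) by (simp add: prod_eq_iff)
  then obtain i where i: "snd v $ i \<noteq> 0" by (auto simp: vec_eq_iff)
  have q: "- lat_form k v v = (\<Sum>i\<in>UNIV. (snd v $ i)^2)"
    unfolding lat_form_def using True by (simp add: power2_eq_square)
  have "0 < (snd v $ i)^2" using i by simp
  also have "\<dots> \<le> (\<Sum>i\<in>UNIV. (snd v $ i)^2)"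
    by (rule member_le_sum) auto
  finally show ?thesis using q by simp
next
  case False
  have "real CARD('n) * (- lat_form k v v) \<ge> ((real k + 2)^2 - real CARD('n) * real k) * (fst v)^2"
    using key_ineq assms by blast
  moreover have "((real k + 2)^2 - real CARD('n) * real k) * (fst v)^2 \<ge> 4 * (fst v)^2"
    using coef_ge4[OF assms(2)] by (intro mult_right_mono) auto
  moreover have "(fst v)^2 > 0" using False by simp
  ultimately have "real CARD('n) * (- lat_form k v v) > 0" by linarith
  then show ?thesis by (simp add: zero_less_mult_iff mult_less_0_iff)
qed

lemma lf_int:
  assumes "x \<in> lattice_pts" "y \<in> lattice_pts"
  shows "lat_form k x y \<in> \<int>"
  using assms unfolding lat_form_def lattice_pts_def
  by (intro Ints_diff Ints_mult Ints_sum) auto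

lemma lattice_comb:
  assumes "x \<in> lattice_pts" "y \<in> lattice_pts" "c \<in> \<int>"
  shows "x - c *\<^sub>R y \<in> lattice_pts"
  using assms unfolding lattice_pts_def by (auto intro!: Ints_diff Ints_mult)


lemma abs_le_sq: "\<bar>x::real\<bar> \<le> 1 + x^2"
proof -
  have "0 \<le> (\<bar>x\<bar> - 1)^2" by simp
  then have "0 \<le> x^2 - 2 * \<bar>x\<bar> + 1" by (simp add: power2_eq_square algebra_simps)
  then show ?thesis by (smt (verit) zero_le_power2)
qed

lemma roots_bound:
  fixes x :: "real \<times> (real^'n)"
  assumes "k \<ge> 1" "CARD('n) \<le> k + 4" "x \<in> roots k"
  shows "\<bar>fst x\<bar> \<le> real (k * CARD('n) + CARD('n) + 3)"
    and "\<bar>snd x $ i\<bar> \<le> real (k * CARD('n) + CARD('n) + 3)"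
proof -
  let ?l = "real CARD('n)"
  have perp: "x \<in> omega_perp k" and q: "lat_form k x x = -2"
    using assms(3) unfolding roots_def omega_perp_def by auto
  have "?l * 2 \<ge> ((real k + 2)^2 - ?l * real k) * (fst x)^2"
    using key_ineq[OF assms(1) perp] q by simp
  moreover have "((real k + 2)^2 - ?l * real k) * (fst x)^2 \<ge> 4 * (fst x)^2"
    using coef_ge4[OF assms(2)] by (intro mult_right_mono) auto
  ultimately have a2: "(fst x)^2 \<le> ?l" by linarith
  have qq: "(\<Sum>i\<in>UNIV. (snd x $ i)^2) = real k * (fst x)^2 + 2"
    using q unfolding lat_form_def by (simp add: power2_eq_square)
  have "(snd x $ i)^2 \<le> (\<Sum>i\<in>UNIV. (snd x $ i)^2)"
    by (rule member_le_sum) auto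
  also have "\<dots> \<le> real k * ?l + 2" unfolding qq using a2
    by (simp add: mult_left_mono)
  finally have b2: "(snd x $ i)^2 \<le> real k * ?l + 2" .
  show "\<bar>fst x\<bar> \<le> real (k * CARD('n) + CARD('n) + 3)"
  proof -
    have "0 \<le> real k * ?l" by simp
    then show ?thesis using abs_le_sq[of "fst x"] a2 by linarith
  qed
  show "\<bar>snd x $ i\<bar> \<le> real (k * CARD('n) + CARD('n) + 3)"
    using abs_le_sq[of "snd x $ i"] b2 by simp
qed

lemma finite_roots:
  assumes "k \<ge> 1" "CARD('n::finite) \<le> k + 4"
  shows "finite (roots k :: (real \<times> (real^'n)) set)"
proof -
  define N :: int where "N = int (k * CARD('n) + CARD('n) + 3)"
  let ?f = "\<lambda>(a::int, g::'n \<Rightarrow> int). (real_of_int a, (\<chi> i. real_of_int (g i)))"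
  have "roots k \<subseteq> ?f ` ({-N..N} \<times> (PiE UNIV (\<lambda>_. {-N..N})))"
  proof
    fix x :: "real \<times> (real^'n)" assume x: "x \<in> roots k"
    have lat: "fst x \<in> \<int>" "\<And>i. snd x $ i \<in> \<int>"
      using x unfolding roots_def lattice_pts_def by auto
    have "x = ?f (\<lfloor>fst x\<rfloor>, \<lambda>i. \<lfloor>snd x $ i\<rfloor>)"
      using lat by (simp add: prod_eq_iff vec_eq_iff of_int_floor)
    moreover have "\<lfloor>fst x\<rfloor> \<in> {-N..N}"
    proof -
      have "\<bar>fst x\<bar> \<le> real_of_int N" using roots_bound(1)[OF assms x] by (simp add: N_def)
      then show ?thesis by (simp add: abs_le_iff floor_le_iff le_floor_iff)
    qed
    moreover have "(\<lambda>i. \<lfloor>snd x $ i\<rfloor>) \<in> PiE UNIV (\<lambda>_. {-N..N})"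
    proof -
      have h: "\<And>i. \<bar>snd x $ i\<bar> \<le> real_of_int N" using roots_bound(2)[OF assms x] by (simp add: N_def)
      have "\<And>i. \<lfloor>snd x $ i\<rfloor> \<in> {-N..N}"
      proof -
        fix i show "\<lfloor>snd x $ i\<rfloor> \<in> {-N..N}" using h[of i] by (simp add: abs_le_iff floor_le_iff le_floor_iff)
      qed
      then show ?thesis by (auto simp: PiE_iff)
    qed
    ultimately show "x \<in> ?f ` ({-N..N} \<times> (PiE UNIV (\<lambda>_. {-N..N})))" by blast
  qed
  moreover have "finite ({-N..N} \<times> (PiE UNIV (\<lambda>_::'n. {-N..N})))"
    by (intro finite_cartesian_product finite_PiE) auto
  ultimately show ?thesis by (meson finite_imageI finite_subset)
qed


lemma roots_perp: "roots k \<subseteq> omega_perp k"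
  unfolding roots_def omega_perp_def by auto

lemma span_roots_perp: "span (roots k) \<subseteq> omega_perp k"
  by (rule span_minimal[OF roots_perp subspace_perp])

lemma lf_expand: "lat_form k (m - c *\<^sub>R x) (m - c *\<^sub>R x)
      = lat_form k m m - 2 * c * lat_form k x m + c * c * lat_form k x x"
proof -
  have a: "lat_form k m (m - c *\<^sub>R x) = lat_form k m m - c * lat_form k x m"
    by (subst lf_sym) (simp add: lf_diff_left lf_scale_left lf_sym[of k x m])
  have b: "lat_form k x (m - c *\<^sub>R x) = lat_form k x m - c * lat_form k x x"
    by (subst lf_sym) (simp add: lf_diff_left lf_scale_left lf_sym[of k x m])
  show ?thesis by (simp add: lf_diff_left lf_scale_left a b algebra_simps)
qed

lemma root_sys:
  assumes "k \<ge> 1" "CARD('n::finite) \<le> k + 4"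
  shows "root_system_in (\<lambda>x y. - lat_form k x y) (span (roots k :: (real \<times> (real^'n)) set)) (roots k)"
  unfolding root_system_in_def
proof (intro conjI ballI allI impI)
  let ?R = "roots k :: (real \<times> (real^'n)) set"
  show "subspace (span ?R)" by (rule subspace_span)
  show "finite ?R" by (rule finite_roots[OF assms])
  show "?R \<subseteq> span ?R" by (rule span_superset)
  show "span ?R = span ?R" ..
  show "0 \<notin> ?R" unfolding roots_def by simp
  fix v assume "v \<in> span ?R" "v \<noteq> 0"
  then show "0 < - lat_form k v v" using pos_def[OF assms] span_roots_perp by blast
next
  let ?R = "roots k :: (real \<times> (real^'n)) set"
  fix x c assume x: "x \<in> ?R" and cx: "c *\<^sub>R x \<in> ?R"
  have "lat_form k (c *\<^sub>R x) (c *\<^sub>R x) = c * c * lat_form k x x"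
    by (simp add: lf_scale_left lf_sym[of k x "c *\<^sub>R x"])
  then have "-2 = c * c * (-2)" using x cx unfolding roots_def by simp
  then have "c * c = 1" by simp
  then show "c = 1 \<or> c = -1" by (metis square_eq_1_iff)
next
  let ?R = "roots k :: (real \<times> (real^'n)) set"
  fix x m assume x: "x \<in> ?R" and m: "m \<in> ?R"
  have xx: "lat_form k x x = -2" using x unfolding roots_def by simp
  have coef: "2 * - lat_form k x m / - lat_form k x x = - lat_form k x m" using xx by simp
  show "2 * - lat_form k x m / - lat_form k x x \<in> \<int>"
    unfolding coef using x m unfolding roots_def by (auto intro: lf_int)
  let ?c = "- lat_form k x m"
  have "m - ?c *\<^sub>R x \<in> lattice_pts"
  proof (rule lattice_comb)
    show "m \<in> lattice_pts" "x \<in> lattice_pts" using x m unfolding roots_def by auto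
    then show "?c \<in> \<int>" by (intro Ints_minus lf_int)
  qed
  moreover have "lat_form k (m - ?c *\<^sub>R x) (m - ?c *\<^sub>R x) = -2"
  proof -
    have "lat_form k (m - ?c *\<^sub>R x) (m - ?c *\<^sub>R x)
      = lat_form k m m - 2 * ?c * lat_form k x m + ?c * ?c * lat_form k x x"
      by (rule lf_expand)
    then show ?thesis using xx m unfolding roots_def by (simp add: algebra_simps)
  qed
  moreover have "lat_form k (m - ?c *\<^sub>R x) (omega k) = 0"
    unfolding lf_diff_left lf_scale_left using x m unfolding roots_def by simp
  ultimately show "m - (2 * - lat_form k x m / - lat_form k x x) *\<^sub>R x \<in> ?R"
    unfolding coef roots_def by simp
qed


lemma diff_root:
  assumes "k \<ge> 1" "i \<noteq> j"
  shows "((0::real), axis i (1::real) - axis j 1) \<in> (roots k :: (real \<times> (real^'n)) set)"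
proof -
  have sq: "(\<Sum>t\<in>UNIV. (axis i (1::real) - axis j 1) $ t * (axis i 1 - axis j 1) $ t) = 2"
  proof -
    have "\<And>t. (axis i (1::real) - axis j 1) $ t * (axis i 1 - axis j 1) $ t
          = (if t = i then 1 else 0) + (if t = j then 1 else 0)"
      using assms(2) by (auto simp: axis_def)
    then show ?thesis using assms(2) by (simp add: sum.distrib)
  qed
  have s: "(\<Sum>t\<in>UNIV. (axis i (1::real) - axis j 1) $ t) = 0"
    by (simp add: axis_def sum_subtractf)
  show ?thesis
    unfolding roots_def lattice_pts_def
    using sq s assms(1) by (auto simp: lat_form_def omega_def axis_def)
qed

lemma span_sum0:
  fixes z :: "real \<times> (real^'n)"
  assumes "k \<ge> 1" "fst z = 0" "(\<Sum>i\<in>UNIV. snd z $ i) = 0"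
  shows "z \<in> span (roots k)"
proof -
  obtain j :: 'n where True by blast
  define r where "r i = ((0::real), axis i (1::real) - axis j 1)" for i
  have z: "z = (\<Sum>i\<in>UNIV. (snd z $ i) *\<^sub>R r i)"
  proof (rule prod_eqI)
    show "fst z = fst (\<Sum>i\<in>UNIV. (snd z $ i) *\<^sub>R r i)"
      using assms(2) by (simp add: fst_sum r_def)
    show "snd z = snd (\<Sum>i\<in>UNIV. (snd z $ i) *\<^sub>R r i)"
    proof -
      have comp: "snd z $ t = (\<Sum>i\<in>UNIV. snd z $ i * (axis i 1 - axis j 1) $ t)" for t
      proof -
      have pt: "\<And>i. snd z $ i * (axis i 1 - axis j 1) $ t
          = (if i = t then snd z $ i else 0) - (if t = j then snd z $ i else 0)"
        by (auto simp: axis_def)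
      have "(\<Sum>i\<in>UNIV. snd z $ i * (axis i 1 - axis j 1) $ t)
          = (\<Sum>i\<in>UNIV. (if i = t then snd z $ i else 0)) - (\<Sum>i\<in>UNIV. (if t = j then snd z $ i else 0))"
        unfolding pt by (rule sum_subtractf)
      also have "\<dots> = snd z $ t"
        using assms(3) by (cases "t = j") simp_all
      finally show "snd z $ t = (\<Sum>i\<in>UNIV. snd z $ i * (axis i 1 - axis j 1) $ t)" by simp
      qed
      have h: "snd (\<Sum>i\<in>UNIV. (snd z $ i) *\<^sub>R r i) $ t = (\<Sum>i\<in>UNIV. snd z $ i * (axis i 1 - axis j 1) $ t)" for t
        by (simp add: snd_sum sum_component r_def)
      show ?thesis
      proof (rule vec_eq_iff[THEN iffD2], rule allI)
        fix t show "snd z $ t = snd (\<Sum>i\<in>UNIV. (snd z $ i) *\<^sub>R r i) $ t"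
          by (rule trans[OF comp h[symmetric]])
      qed
    qed
  qed
  have "(\<Sum>i\<in>UNIV. (snd z $ i) *\<^sub>R r i) \<in> span (roots k)"
  proof (intro span_sum span_scale)
    fix i
    show "r i \<in> span (roots k)"
    proof (cases "i = j")
      case True
      then have "r i = 0" by (simp add: r_def prod_eq_iff)
      then show ?thesis by (simp add: span_zero)
    next
      case False then show ?thesis using diff_root[OF assms(1) False] by (simp add: r_def span_base)
    qed
  qed
  then show ?thesis by (subst z)
qed


lemma span_with_u:
  fixes u :: "real \<times> (real^'n)"
  assumes "k \<ge> 1" "u \<in> omega_perp k" "fst u = 1"
  shows "omega_perp k \<subseteq> span (insert u (roots k))"
proof
  fix v :: "real \<times> (real^'n)" assume v: "v \<in> omega_perp k"
  define w where "w = v - fst v *\<^sub>R u"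
  have wH: "w \<in> omega_perp k" unfolding w_def
    by (rule subspace_diff[OF subspace_perp v subspace_scale[OF subspace_perp assms(2)]])
  have wf: "fst w = 0" using assms(3) by (simp add: w_def)
  have e: "lat_form k w (omega k) = - (real k + 2) * fst w - (\<Sum>i\<in>UNIV. snd w $ i)"
    by (rule lf_omega[OF assms(1)])
  have z: "lat_form k w (omega k) = 0" using wH unfolding omega_perp_def mem_Collect_eq .
  have "(\<Sum>i\<in>UNIV. snd w $ i) = 0" using e z wf by simp
  then have "w \<in> span (roots k)" using span_sum0[OF assms(1) wf] by blast
  then have "w \<in> span (insert u (roots k))" using span_mono[of "roots k" "insert u (roots k)"] by blast
  moreover have "fst v *\<^sub>R u \<in> span (insert u (roots k))"
    by (intro span_scale span_base) simp
  ultimately have "w + fst v *\<^sub>R u \<in> span (insert u (roots k))" by (rule span_add)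
  then show "v \<in> span (insert u (roots k))" by (simp add: w_def)
qed

lemma big_case:
  assumes "k \<ge> 1" "CARD('n::finite) \<ge> k + 2"
  shows "span (roots k :: (real \<times> (real^'n)) set) = omega_perp k"
proof -
  have "k + 2 \<le> card (UNIV :: 'n set)" using assms(2) by simp
  then obtain S :: "'n set" where "S \<subseteq> UNIV" and S: "card S = k + 2" and "finite S"
    by (rule obtain_subset_with_card_n)
  define u :: "real \<times> (real^'n)" where "u = (1, \<chi> i. if i \<in> S then -1 else 0)"
  have c1: "(\<Sum>i\<in>UNIV. (if i \<in> S then -1 else 0) * (if i \<in> S then -1 else 0)) = real (card S)"
  proof -
    have "(\<Sum>i\<in>UNIV. (if i \<in> S then -1 else 0) * (if i \<in> S then -1 else (0::real)))
        = (\<Sum>i\<in>UNIV. if i \<in> S then 1 else 0)" by (rule sum.cong) auto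
    also have "\<dots> = real (card S)" by (simp add: sum.If_cases)
    finally show ?thesis .
  qed
  have c2: "(\<Sum>i\<in>UNIV. (if i \<in> S then -1 else (0::real))) = - real (card S)"
    by (simp add: sum.If_cases)
  have uR: "u \<in> roots k"
  proof -
    have l: "u \<in> lattice_pts" unfolding lattice_pts_def u_def by auto
    have q: "lat_form k u u = -2"
      unfolding lat_form_def u_def using c1 S by simp
    have o: "lat_form k u (omega k) = 0"
      unfolding lf_omega[OF assms(1)] u_def using c2 S by simp
    show ?thesis unfolding roots_def using l q o by simp
  qed
  have "omega_perp k \<subseteq> span (insert u (roots k))"
  proof -
    have uH: "u \<in> omega_perp k" using uR roots_perp by blast
    have "fst u = 1" by (simp add: u_def)
    then show ?thesis by (rule span_with_u[OF assms(1) uH])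
  qed
  then have "omega_perp k \<subseteq> span (roots k :: (real \<times> (real^'n)) set)" using uR by (simp add: insert_absorb)
  then show ?thesis by (intro equalityI span_roots_perp)
qed


lemma small_roots_fst:
  fixes x :: "real \<times> (real^'n)"
  assumes "k \<ge> 1" "CARD('n) < k + 2" "x \<in> roots k"
  shows "fst x = 0"
proof (rule ccontr)
  assume nz: "fst x \<noteq> 0"
  let ?l = "real CARD('n)"
  have perp: "x \<in> omega_perp k" and q: "lat_form k x x = -2"
    and int: "fst x \<in> \<int>"
    using assms(3) unfolding roots_def omega_perp_def lattice_pts_def by auto
  have "\<bar>fst x\<bar> \<ge> 1" using Ints_nonzero_abs_ge1[OF int nz] .
  then have "1 * 1 \<le> \<bar>fst x\<bar> * \<bar>fst x\<bar>" by (intro mult_mono) auto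
  then have a1: "(fst x)^2 \<ge> 1" by (simp add: power2_eq_square)
  have lk: "?l \<le> real k + 1" using assms(2) by simp
  have "?l * 2 \<ge> ((real k + 2)^2 - ?l * real k) * (fst x)^2"
    using key_ineq[OF assms(1) perp] q by simp
  moreover have "(real k + 2)^2 - ?l * real k \<ge> 3 * real k + 4"
  proof -
    have "?l * real k \<le> (real k + 1) * real k" using lk by (intro mult_right_mono) auto
    then show ?thesis by (simp add: power2_eq_square algebra_simps)
  qed
  moreover have "((real k + 2)^2 - ?l * real k) * (fst x)^2 \<ge> (real k + 2)^2 - ?l * real k"
  proof -
    have "0 \<le> (real k + 2)^2 - ?l * real k" using calculation(2) by linarith
    then have "((real k + 2)^2 - ?l * real k) * 1 \<le> ((real k + 2)^2 - ?l * real k) * (fst x)^2"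
      using a1 by (intro mult_left_mono) auto
    then show ?thesis by simp
  qed
  ultimately show False using lk by linarith
qed

lemma small_case:
  assumes "k \<ge> 1" "CARD('n::finite) < k + 2"
  shows "dim (span (roots k :: (real \<times> (real^'n)) set)) + 1 = dim (omega_perp k :: (real \<times> (real^'n)) set)"
proof -
  obtain j :: 'n where True by blast
  define u :: "real \<times> (real^'n)" where "u = (1, axis j (- (real k + 2)))"
  have uH: "u \<in> omega_perp k"
    unfolding omega_perp_def mem_Collect_eq lf_omega[OF assms(1)] u_def
    by (simp add: axis_def)
  have sub: "subspace {v :: real \<times> (real^'n). fst v = 0}"
    unfolding subspace_def by auto
  have "roots k \<subseteq> {v :: real \<times> (real^'n). fst v = 0}"
    using small_roots_fst[OF assms] by blast
  then have "span (roots k) \<subseteq> {v :: real \<times> (real^'n). fst v = 0}"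
    by (rule span_minimal[OF _ sub])
  then have nu: "u \<notin> span (roots k)" by (auto simp: u_def)
  have "omega_perp k \<subseteq> span (insert u (roots k))"
    by (rule span_with_u[OF assms(1) uH]) (simp add: u_def)
  moreover have "span (insert u (roots k)) \<subseteq> omega_perp k"
    using uH roots_perp by (intro span_minimal subspace_perp) auto
  ultimately have eq: "span (insert u (roots k)) = omega_perp k" by blast
  have "dim (omega_perp k :: (real \<times> (real^'n)) set) = dim (insert u (roots k))"
    unfolding eq[symmetric] by (rule dim_span)
  also have "\<dots> = dim (roots k :: (real \<times> (real^'n)) set) + 1"
    using nu by (simp add: dim_insert)
  finally show ?thesis by (simp add: dim_span)
qed

theorem proposition5p4:
  fixes k :: nat
  assumes "k \<ge> 1" and "2 \<le> CARD('n::finite)" and "CARD('n) \<le> k + 4"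
  shows "root_system_in (\<lambda>x y. - lat_form k x y) (span (roots k :: (real \<times> (real^'n)) set)) (roots k)
       \<and> roots k \<subseteq> omega_perp k
       \<and> (CARD('n) \<ge> k + 2 \<longrightarrow> span (roots k :: (real \<times> (real^'n)) set) = omega_perp k)
       \<and> (CARD('n) < k + 2 \<longrightarrow>
            dim (span (roots k :: (real \<times> (real^'n)) set)) + 1 = dim (omega_perp k :: (real \<times> (real^'n)) set))"
proof (intro conjI impI)
  show "root_system_in (\<lambda>x y. - lat_form k x y) (span (roots k :: (real \<times> (real^'n)) set)) (roots k)"
    by (rule root_sys[OF assms(1,3)])
  show "roots k \<subseteq> omega_perp k" by (rule roots_perp)
  show "CARD('n) \<ge> k + 2 \<Longrightarrow> span (roots k :: (real \<times> (real^'n)) set) = omega_perp k"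
    by (rule big_case[OF assms(1)])
  show "CARD('n) < k + 2 \<Longrightarrow>
            dim (span (roots k :: (real \<times> (real^'n)) set)) + 1 = dim (omega_perp k :: (real \<times> (real^'n)) set)"
    by (rule small_case[OF assms(1)])
qed

end
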